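(* Let $(X_i,A_i,Y_i)_{1\le i\le n}$ be random with $X_i\in\mathcal X$, $A_i\in\{0,1\}$, $Y_i\in\mathcal Y$, and let $X'_1,\dots,X'_M$ be the distinct values among $X_1,\dots,X_n$. Suppose that, conditionally on $(X_{1:n},A_{1:n})$, the joint distribution of $(Y_1,\dots,Y_n)$ is invariant under every permutation of $[n]$ that maps each block $I_k=\{i: X_i=X'_k\}$ to itself ($k\in[M]$). Let $s:\mathcal X\times\mathcal Y\to\mathbb R$ be a fixed measurable score function and $S_i=s(X_i,Y_i)$. If $N^{(0)}\ge1$, define for every $x\in\mathcal X$ $$\hat C(x)=\Big\{y\in\mathcal Y:\ s(x,y)\le Q_{1-\alpha}\Big(\sum_{k=1}^M\sum_{i\in I_k^1}\frac{1}{N^{(0)}}\frac{N_k^0}{N_k}\delta_{S_i}+\frac{1}{N^{(0)}}\sum_{k=1}^M\frac{(N_k^0)^2}{N_k}\delta_{+\infty}\Big)\Big\},$$ and if $N^{(0)}=0$ let $\hat C(x)=\mathcal Y$. Then $$\mathbb E\Big[\frac{1}{N^{(0)}}\sum_{i\in I_{A=0}}\mathbf 1\{Y_i\in\hat C(X_i)\}\ \Big|\ X_{1:n},A_{1:n}\Big]\ge 1-\alpha.$$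
   Context: $Y_i$ is observed only when $A_i=1$. $I_{A=0}=\{i\in[n]:A_i=0\}$, $N^{(0)}=|I_{A=0}|$. For $k\in[M]$: $I_k=\{i:X_i=X'_k\}$, $I_k^0=\{i\in I_k:A_i=0\}$, $I_k^1=\{i\in I_k:A_i=1\}$, $N_k=|I_k|$, $N_k^0=|I_k^0|$. For a distribution $P$ on $\mathbb R\cup\{+\infty\}$ and $\alpha\in(0,1)$, $Q_{1-\alpha}(P)=\inf\{t\in\mathbb R: \mathbb P_{T\sim P}(T\le t)\ge1-\alpha\}$ (possibly $+\infty$); $\delta_v$ is the point mass at $v$. The coverage proportion $\frac{1}{N^{(0)}}\sum_{i\in I_{A=0}}\mathbf 1\{Y_i\in\hat C(X_i)\}$ is defined to equal $1$ when $N^{(0)}=0$. *)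

theory Defs
  imports "HOL-Probability.Probability" "HOL-Combinatorics.Permutations"
begin

text \<open>Q_{1-alpha} of the finitely supported distribution  sum_{j in J} w j * delta_{v j}
  on the extended reals: inf of the real t with P(T <= t) >= 1 - alpha (Inf of empty = +infinity).\<close>
definition wquantile :: "real \<Rightarrow> ('i \<Rightarrow> real) \<Rightarrow> ('i \<Rightarrow> ereal) \<Rightarrow> 'i set \<Rightarrow> ereal" where
  "wquantile \<alpha> w v J =
     Inf (ereal ` {t::real. (\<Sum>j\<in>{j\<in>J. v j \<le> ereal t}. w j) \<ge> 1 - \<alpha>})"

definition N0 :: "nat \<Rightarrow> (nat \<Rightarrow> nat) \<Rightarrow> nat" where
  "N0 n A = card {i\<in>{..<n}. A i = 0}"

definition Nblk :: "nat \<Rightarrow> (nat \<Rightarrow> 'x) \<Rightarrow> 'x \<Rightarrow> nat" where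
  "Nblk n X xv = card {j\<in>{..<n}. X j = xv}"

definition Nblk0 :: "nat \<Rightarrow> (nat \<Rightarrow> 'x) \<Rightarrow> (nat \<Rightarrow> nat) \<Rightarrow> 'x \<Rightarrow> nat" where
  "Nblk0 n X A xv = card {j\<in>{..<n}. X j = xv \<and> A j = 0}"

text \<open>Weights of the mixture: atom Some i (i with A i = 1) at S_i with weight
  (1/N0) * N_k^0 / N_k where k is the block of i; atom None at +infinity with weight
  (1/N0) * sum over distinct values x'_k of (N_k^0)^2 / N_k.\<close>
definition cq_weight :: "nat \<Rightarrow> (nat \<Rightarrow> 'x) \<Rightarrow> (nat \<Rightarrow> nat) \<Rightarrow> nat option \<Rightarrow> real" where
  "cq_weight n X A j = (case j of
      Some i \<Rightarrow> (1 / real (N0 n A)) * (real (Nblk0 n X A (X i)) / real (Nblk n X (X i)))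
    | None \<Rightarrow> (1 / real (N0 n A)) *
        (\<Sum>xv\<in>X ` {..<n}. real (Nblk0 n X A xv) ^ 2 / real (Nblk n X xv)))"

definition cq_value :: "('x \<Rightarrow> 'y \<Rightarrow> real) \<Rightarrow> (nat \<Rightarrow> 'x) \<Rightarrow> (nat \<Rightarrow> 'y) \<Rightarrow> nat option \<Rightarrow> ereal" where
  "cq_value s X Y j = (case j of Some i \<Rightarrow> ereal (s (X i) (Y i)) | None \<Rightarrow> PInfty)"

definition cq_atoms :: "nat \<Rightarrow> (nat \<Rightarrow> nat) \<Rightarrow> nat option set" where
  "cq_atoms n A = Some ` {i\<in>{..<n}. A i = 1} \<union> {None}"

definition Chat :: "real \<Rightarrow> ('x \<Rightarrow> 'y \<Rightarrow> real) \<Rightarrow> nat \<Rightarrow> (nat \<Rightarrow> 'x) \<Rightarrow> (nat \<Rightarrow> nat)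
                     \<Rightarrow> (nat \<Rightarrow> 'y) \<Rightarrow> 'x \<Rightarrow> 'y set" where
  "Chat \<alpha> s n X A Y x =
     (if N0 n A = 0 then UNIV
      else {y. ereal (s x y) \<le> wquantile \<alpha> (cq_weight n X A) (cq_value s X Y) (cq_atoms n A)})"

definition coverage :: "real \<Rightarrow> ('x \<Rightarrow> 'y \<Rightarrow> real) \<Rightarrow> nat \<Rightarrow> (nat \<Rightarrow> 'x) \<Rightarrow> (nat \<Rightarrow> nat)
                     \<Rightarrow> (nat \<Rightarrow> 'y) \<Rightarrow> real" where
  "coverage \<alpha> s n X A Y =
     (if N0 n A = 0 then 1
      else (1 / real (N0 n A)) *
        (\<Sum>i\<in>{i\<in>{..<n}. A i = 0}. if Y i \<in> Chat \<alpha> s n X A Y (X i) then 1 else 0))"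

end

theory Submission
  imports Defs
begin

lemma sum_ind:
  fixes w :: "'i \<Rightarrow> real"
  assumes "finite J"
  shows "(\<Sum>i\<in>J. w i * (if P i then 1 else 0)) = sum w {i\<in>J. P i}"
  using assms by (auto simp: sum.inter_filter intro!: sum.cong)

lemma wq_char:
  fixes w :: "'i \<Rightarrow> real" and v :: "'i \<Rightarrow> ereal"
  assumes fin: "finite J" and nn: "\<And>j. j \<in> J \<Longrightarrow> 0 \<le> w j"
  shows "ereal a \<le> wquantile \<alpha> w v J \<longleftrightarrow> (\<Sum>j\<in>{j\<in>J. v j < ereal a}. w j) < 1 - \<alpha>"
proof -
  let ?F = "\<lambda>t. \<Sum>j\<in>{j\<in>J. v j \<le> ereal t}. w j"
  have "ereal a \<le> wquantile \<alpha> w v J \<longleftrightarrow> (\<forall>t. 1-\<alpha> \<le> ?F t \<longrightarrow> a \<le> t)"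
    unfolding wquantile_def by (auto simp: le_Inf_iff)
  also have "\<dots> \<longleftrightarrow> (\<Sum>j\<in>{j\<in>J. v j < ereal a}. w j) < 1 - \<alpha>"
  proof
    assume H: "\<forall>t. 1-\<alpha> \<le> ?F t \<longrightarrow> a \<le> t"
    show "(\<Sum>j\<in>{j\<in>J. v j < ereal a}. w j) < 1 - \<alpha>"
    proof (rule ccontr)
      assume c: "\<not> (\<Sum>j\<in>{j\<in>J. v j < ereal a}. w j) < 1 - \<alpha>"
      define R where "R = {a - 1} \<union> (\<lambda>j. real_of_ereal (v j)) ` {j\<in>J. v j < ereal a \<and> v j \<noteq> -\<infinity>}"
      define t where "t = Max R"
      have finR: "finite R" using fin by (simp add: R_def)
      have neR: "R \<noteq> {}" by (simp add: R_def)
      have lt: "\<forall>r\<in>R. r < a"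
      proof
        fix r assume "r \<in> R"
        then show "r < a"
        proof (cases "r = a - 1")
          case False
          with \<open>r \<in> R\<close> obtain j where "v j < ereal a" "v j \<noteq> -\<infinity>" "r = real_of_ereal (v j)"
            by (auto simp: R_def)
          then show ?thesis by (cases "v j") auto
        qed simp
      qed
      have ta: "t < a" using lt finR neR by (simp add: t_def)
      have sub: "{j\<in>J. v j < ereal a} \<subseteq> {j\<in>J. v j \<le> ereal t}"
      proof
        fix j assume j: "j \<in> {j\<in>J. v j < ereal a}"
        show "j \<in> {j\<in>J. v j \<le> ereal t}"
        proof (cases "v j = -\<infinity>")
          case False
          then obtain r where r: "v j = ereal r" using j by (cases "v j") auto
          have "r \<in> R" using j False r unfolding R_def by (auto intro: image_eqI[where x=j])
          then have "r \<le> t" using finR by (simp add: t_def)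
          then show ?thesis using j r by auto
        qed (use j in auto)
      qed
      have "(\<Sum>j\<in>{j\<in>J. v j < ereal a}. w j) \<le> ?F t"
        by (rule sum_mono2) (use fin sub nn in auto)
      then have "a \<le> t" using H c by auto
      then show False using ta by simp
    qed
  next
    assume H: "(\<Sum>j\<in>{j\<in>J. v j < ereal a}. w j) < 1 - \<alpha>"
    show "\<forall>t. 1-\<alpha> \<le> ?F t \<longrightarrow> a \<le> t"
    proof (intro allI impI)
      fix t assume t: "1-\<alpha> \<le> ?F t"
      show "a \<le> t"
      proof (rule ccontr)
        assume "\<not> a \<le> t"
        then have "{j\<in>J. v j \<le> ereal t} \<subseteq> {j\<in>J. v j < ereal a}"
          by (auto intro: le_less_trans)
        then have "?F t \<le> (\<Sum>j\<in>{j\<in>J. v j < ereal a}. w j)"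
          by (intro sum_mono2) (use fin nn in auto)
        then show False using H t by simp
      qed
    qed
  qed
  finally show ?thesis .
qed

lemma mass_lemma:
  fixes w S :: "nat \<Rightarrow> real"
  assumes fin: "finite J" and nn: "\<And>j. j\<in>J \<Longrightarrow> 0 \<le> w j" and tot: "1 - \<alpha> \<le> sum w J"
  shows "1 - \<alpha> \<le> (\<Sum>i\<in>J. w i * (if (\<Sum>l\<in>J. w l * (if S l < S i then 1 else 0)) < 1 - \<alpha> then 1 else 0))"
proof -
  define T where "T = {i\<in>J. (\<Sum>l\<in>J. w l * (if S l < S i then 1 else 0)) < 1 - \<alpha>}"
  have eq: "(\<Sum>i\<in>J. w i * (if (\<Sum>l\<in>J. w l * (if S l < S i then 1 else 0)) < 1 - \<alpha> then 1 else 0)) = sum w T"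
    unfolding T_def by (rule sum_ind[OF fin])
  have TJ: "T \<subseteq> J" by (auto simp: T_def)
  show ?thesis
  proof (cases "T = J")
    case True then show ?thesis using eq tot by simp
  next
    case False
    define C where "C = J - T"
    have neC: "C \<noteq> {}" using False TJ by (auto simp: C_def)
    have finC: "finite C" using fin by (simp add: C_def)
    have "Min (S ` C) \<in> S ` C" using finC neC by simp
    then obtain i0 where i0: "i0 \<in> C" "S i0 = Min (S ` C)" by auto
    have sub: "{l\<in>J. S l < S i0} \<subseteq> T"
    proof
      fix l assume l: "l \<in> {l\<in>J. S l < S i0}"
      show "l \<in> T"
      proof (rule ccontr)
        assume "l \<notin> T"
        then have "l \<in> C" using l by (auto simp: C_def)
        then have "S i0 \<le> S l" using i0 finC by simp
        then show False using l by simp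
      qed
    qed
    have "\<not> (\<Sum>l\<in>J. w l * (if S l < S i0 then 1 else 0)) < 1 - \<alpha>"
      using i0 by (auto simp: C_def T_def)
    then have "1 - \<alpha> \<le> sum w {l\<in>J. S l < S i0}"
      using sum_ind[OF fin, of w "\<lambda>l. S l < S i0"] by simp
    also have "\<dots> \<le> sum w T"
      by (rule sum_mono2) (use fin TJ sub nn in \<open>auto intro: finite_subset\<close>)
    finally show ?thesis using eq by simp
  qed
qed

lemma count_lemma:
  fixes g :: "nat \<Rightarrow> real" and X :: "nat \<Rightarrow> 'x"
  shows "(\<Sum>i\<in>{i\<in>{..<n}. A i = 0}. (\<Sum>j\<in>{j\<in>{..<n}. X j = X i}. g j) / real (Nblk n X (X i)))
        = (\<Sum>j<n. g j * real (Nblk0 n X A (X j)) / real (Nblk n X (X j)))"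
proof -
  have "(\<Sum>i\<in>{i\<in>{..<n}. A i = 0}. (\<Sum>j\<in>{j\<in>{..<n}. X j = X i}. g j) / real (Nblk n X (X i)))
      = (\<Sum>i\<in>{i\<in>{..<n}. A i = 0}. \<Sum>j<n. if X i = X j then g j / real (Nblk n X (X j)) else 0)"
  proof (rule sum.cong[OF refl])
    fix i
    have "(\<Sum>j\<in>{j\<in>{..<n}. X j = X i}. g j) / real (Nblk n X (X i))
        = (\<Sum>j\<in>{j\<in>{..<n}. X i = X j}. g j / real (Nblk n X (X j)))"
      by (auto simp: sum_divide_distrib intro!: sum.cong)
    also have "\<dots> = (\<Sum>j<n. if X i = X j then g j / real (Nblk n X (X j)) else 0)"
      by (rule sum.inter_filter) simp
    finally show "(\<Sum>j\<in>{j\<in>{..<n}. X j = X i}. g j) / real (Nblk n X (X i))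
        = (\<Sum>j<n. if X i = X j then g j / real (Nblk n X (X j)) else 0)" .
  qed
  also have "\<dots> = (\<Sum>j<n. \<Sum>i\<in>{i\<in>{..<n}. A i = 0}. if X i = X j then g j / real (Nblk n X (X j)) else 0)"
    by (rule sum.swap)
  also have "\<dots> = (\<Sum>j<n. real (card {i\<in>{i\<in>{..<n}. A i = 0}. X i = X j}) * (g j / real (Nblk n X (X j))))"
    by (rule sum.cong[OF refl]) (simp add: sum.inter_filter[symmetric])
  also have "\<dots> = (\<Sum>j<n. g j * real (Nblk0 n X A (X j)) / real (Nblk n X (X j)))"
  proof (rule sum.cong[OF refl])
    fix j
    have "{i\<in>{i\<in>{..<n}. A i = 0}. X i = X j} = {i\<in>{..<n}. X i = X j \<and> A i = 0}" by auto
    then show "real (card {i\<in>{i\<in>{..<n}. A i = 0}. X i = X j}) * (g j / real (Nblk n X (X j)))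
       = g j * real (Nblk0 n X A (X j)) / real (Nblk n X (X j))"
      by (simp add: Nblk0_def)
  qed
  finally show ?thesis .
qed

theorem theorem1:
  fixes MX :: "'x measure" and MY :: "'y measure"
    and s :: "'x \<Rightarrow> 'y \<Rightarrow> real"
    and n :: nat and X :: "nat \<Rightarrow> 'x" and A :: "nat \<Rightarrow> nat"
    and P :: "(nat \<Rightarrow> 'y) measure" and \<alpha> :: real
  assumes alpha: "0 < \<alpha>" "\<alpha> < 1"
    and X_space: "\<And>i. i < n \<Longrightarrow> X i \<in> space MX"
    and A_01: "\<And>i. i < n \<Longrightarrow> A i \<in> {0, 1}"
    and s_meas: "(\<lambda>(x, y). s x y) \<in> borel_measurable (MX \<Otimes>\<^sub>M MY)"
    and P_prob: "prob_space P"
    and P_sets: "sets P = sets (PiM {..<n} (\<lambda>_. MY))"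
    and exch: "\<And>\<pi>. \<pi> permutes {..<n} \<Longrightarrow> (\<forall>i<n. X (\<pi> i) = X i) \<Longrightarrow>
        distr P (PiM {..<n} (\<lambda>_. MY)) (\<lambda>y. \<lambda>i\<in>{..<n}. y (\<pi> i)) = P"
  shows "(\<integral>y. coverage \<alpha> s n X A y \<partial>P) \<ge> 1 - \<alpha>"
proof -
  interpret P: prob_space P by (rule P_prob)
  define M where "M = PiM {..<n} (\<lambda>_::nat. MY)"
  have measP: "\<And>N. measurable P N = measurable M N"
    using measurable_cong_sets[OF P_sets refl] unfolding M_def by auto
  have sX: "\<And>j. j < n \<Longrightarrow> s (X j) \<in> borel_measurable MY"
    using measurable_Pair2[OF s_meas X_space] by simp
  have Sm: "\<And>j. j < n \<Longrightarrow> (\<lambda>y. s (X j) (y j)) \<in> borel_measurable M"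
  proof -
    fix j assume j: "j < n"
    have "(\<lambda>y. y j) \<in> M \<rightarrow>\<^sub>M MY"
      unfolding M_def using measurable_component_singleton[of j "{..<n}" "\<lambda>_. MY"] j by simp
    then show "(\<lambda>y. s (X j) (y j)) \<in> borel_measurable M"
      using measurable_compose sX[OF j] by blast
  qed
  show ?thesis
  proof (cases "N0 n A = 0")
    case True
    then have "\<And>y. coverage \<alpha> s n X A y = 1" by (simp add: coverage_def)
    then show ?thesis using alpha by (simp add: P.prob_space)
  next
    case False
    define w where "w = (\<lambda>j. 1 / real (N0 n A) * (real (Nblk0 n X A (X j)) / real (Nblk n X (X j))))"
    define f where "f = (\<lambda>i y. if (\<Sum>l<n. w l * (if s (X l) (y l) < s (X i) (y i) then 1 else 0)) < 1 - \<alpha> then 1 else (0::real))"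
    define c where "c = (\<lambda>i y. if (\<Sum>l\<in>{l\<in>{..<n}. A l = 1}. w l * (if s (X l) (y l) < s (X i) (y i) then 1 else 0)) < 1 - \<alpha> then 1 else (0::real))"
    have wnn: "\<And>j. 0 \<le> w j" by (simp add: w_def)
    have key: "\<And>i y. (if y i \<in> Chat \<alpha> s n X A y (X i) then 1 else 0) = c i y"
    proof -
      fix i y
      have fa: "finite (cq_atoms n A)" by (simp add: cq_atoms_def)
      have nn: "\<And>j. 0 \<le> cq_weight n X A j"
        by (auto simp: cq_weight_def split: option.split intro!: sum_nonneg divide_nonneg_nonneg)
      have setq: "{j\<in>cq_atoms n A. cq_value s X y j < ereal (s (X i) (y i))}
          = Some ` {l\<in>{..<n}. A l = 1 \<and> s (X l) (y l) < s (X i) (y i)}"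
        by (auto simp: cq_atoms_def cq_value_def)
      have "(\<Sum>j\<in>{j\<in>cq_atoms n A. cq_value s X y j < ereal (s (X i) (y i))}. cq_weight n X A j)
          = (\<Sum>l\<in>{l\<in>{..<n}. A l = 1 \<and> s (X l) (y l) < s (X i) (y i)}. w l)"
        unfolding setq by (subst sum.reindex) (auto simp: cq_weight_def w_def)
      also have "{l\<in>{..<n}. A l = 1 \<and> s (X l) (y l) < s (X i) (y i)}
          = {l\<in>{l\<in>{..<n}. A l = 1}. s (X l) (y l) < s (X i) (y i)}" by auto
      also have "sum w \<dots> = (\<Sum>l\<in>{l\<in>{..<n}. A l = 1}. w l * (if s (X l) (y l) < s (X i) (y i) then 1 else 0))"
        by (rule sum_ind[symmetric]) simp
      finally have eq: "(\<Sum>j\<in>{j\<in>cq_atoms n A. cq_value s X y j < ereal (s (X i) (y i))}. cq_weight n X A j)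
          = (\<Sum>l\<in>{l\<in>{..<n}. A l = 1}. w l * (if s (X l) (y l) < s (X i) (y i) then 1 else 0))" .
      show "(if y i \<in> Chat \<alpha> s n X A y (X i) then 1 else 0) = c i y"
        using wq_char[OF fa nn, where a="s (X i) (y i)" and \<alpha>=\<alpha> and v="cq_value s X y"] False eq
        unfolding Chat_def c_def by auto
    qed
    have cov_eq: "\<And>y. coverage \<alpha> s n X A y = 1 / real (N0 n A) * (\<Sum>i\<in>{i\<in>{..<n}. A i = 0}. c i y)"
      unfolding coverage_def using False key by simp
    have mif: "\<And>Q. {y \<in> space M. Q y} \<in> sets M \<Longrightarrow> (\<lambda>y. if Q y then 1 else (0::real)) \<in> borel_measurable M"
      by (intro measurable_If) auto
    have im: "\<And>i l. i < n \<Longrightarrow> l < n \<Longrightarrow> (\<lambda>y. w l * (if s (X l) (y l) < s (X i) (y i) then 1 else (0::real))) \<in> borel_measurable M"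
      by (intro borel_measurable_times measurable_const mif borel_measurable_less Sm) auto
    have fm: "\<And>i. i < n \<Longrightarrow> f i \<in> borel_measurable M"
    proof -
      fix i assume i: "i < n"
      have "(\<lambda>y. \<Sum>l\<in>{..<n}. w l * (if s (X l) (y l) < s (X i) (y i) then 1 else (0::real))) \<in> borel_measurable M"
        by (rule borel_measurable_sum) (rule im[OF i], simp)
      then show "f i \<in> borel_measurable M"
        unfolding f_def by (intro mif borel_measurable_less measurable_const) auto
    qed
    have cm: "\<And>i. i < n \<Longrightarrow> c i \<in> borel_measurable M"
    proof -
      fix i assume i: "i < n"
      have "(\<lambda>y. \<Sum>l\<in>{l\<in>{..<n}. A l = 1}. w l * (if s (X l) (y l) < s (X i) (y i) then 1 else (0::real))) \<in> borel_measurable M"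
        by (rule borel_measurable_sum) (rule im[OF i], simp)
      then show "c i \<in> borel_measurable M"
        unfolding c_def by (intro mif borel_measurable_less measurable_const) auto
    qed
    have intf: "\<And>i. i < n \<Longrightarrow> integrable P (f i)"
      by (rule P.integrable_const_bound[where B=1]) (simp add: f_def, simp add: measP fm)
    have intc: "\<And>i. i < n \<Longrightarrow> integrable P (c i)"
      by (rule P.integrable_const_bound[where B=1]) (simp add: c_def, simp add: measP cm)
    have fc: "\<And>i y. f i y \<le> c i y"
    proof -
      fix i y
      have "(\<Sum>l\<in>{l\<in>{..<n}. A l = 1}. w l * (if s (X l) (y l) < s (X i) (y i) then 1 else (0::real)))
          \<le> (\<Sum>l<n. w l * (if s (X l) (y l) < s (X i) (y i) then 1 else 0))"
        by (rule sum_mono2) (auto simp: wnn)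
      then show "f i y \<le> c i y" by (auto simp: f_def c_def)
    qed
    have swap: "\<And>i j. i < n \<Longrightarrow> j < n \<Longrightarrow> X i = X j \<Longrightarrow> (\<integral>y. f j y \<partial>P) = (\<integral>y. f i y \<partial>P)"
    proof -
      fix i j assume i: "i < n" and j: "j < n" and Xij: "X i = X j"
      define \<pi> where "\<pi> = Transposition.transpose i j"
      have perm: "\<pi> permutes {..<n}" unfolding \<pi>_def using i j by (intro permutes_swap_id) auto
      have blk: "\<forall>l<n. X (\<pi> l) = X l" using Xij by (auto simp: \<pi>_def Transposition.transpose_def)
      have pl: "\<And>l. l < n \<Longrightarrow> \<pi> l < n" using perm by (meson lessThan_iff permutes_in_image)
      have gm: "(\<lambda>y. \<lambda>l\<in>{..<n}. y (\<pi> l)) \<in> measurable P M"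
        unfolding measP M_def
        by (intro measurable_restrict) (simp add: measurable_component_singleton pl)
      have "(\<integral>y. f j y \<partial>P) = (\<integral>y. f j y \<partial>(distr P M (\<lambda>y. \<lambda>l\<in>{..<n}. y (\<pi> l))))"
        using exch[OF perm blk] by (simp add: M_def)
      also have "\<dots> = (\<integral>y. f j (\<lambda>l\<in>{..<n}. y (\<pi> l)) \<partial>P)"
        by (rule integral_distr[OF gm fm[OF j]])
      also have "\<dots> = (\<integral>y. f i y \<partial>P)"
      proof (rule Bochner_Integration.integral_cong[OF refl])
        fix y
        define hh where "hh = (\<lambda>l. w l * (if s (X l) (y l) < s (X i) (y i) then 1 else (0::real)))"
        have pj: "\<pi> j = i" by (simp add: \<pi>_def)
        have "(\<Sum>l<n. w l * (if s (X l) ((\<lambda>l\<in>{..<n}. y (\<pi> l)) l) < s (X j) ((\<lambda>l\<in>{..<n}. y (\<pi> l)) j) then 1 else (0::real)))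
            = (\<Sum>l<n. hh (\<pi> l))"
        proof (rule sum.cong[OF refl])
          fix l assume l: "l \<in> {..<n}"
          then have "X (\<pi> l) = X l" using blk by auto
          then show "w l * (if s (X l) ((\<lambda>l\<in>{..<n}. y (\<pi> l)) l) < s (X j) ((\<lambda>l\<in>{..<n}. y (\<pi> l)) j) then 1 else (0::real)) = hh (\<pi> l)"
            using l j pj Xij by (simp add: hh_def w_def)
        qed
        also have "\<dots> = (\<Sum>l<n. hh l)"
          by (rule sum.reindex_bij_betw[OF permutes_imp_bij[OF perm]])
        finally show "f j (\<lambda>l\<in>{..<n}. y (\<pi> l)) = f i y" by (simp add: f_def hh_def)
      qed
      finally show "(\<integral>y. f j y \<partial>P) = (\<integral>y. f i y \<partial>P)" .
    qed
    have avg: "\<And>i. i < n \<Longrightarrow> (\<integral>y. f i y \<partial>P) = (\<Sum>j\<in>{j\<in>{..<n}. X j = X i}. (\<integral>y. f j y \<partial>P)) / real (Nblk n X (X i))"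
    proof -
      fix i assume i: "i < n"
      have cpos: "card {j\<in>{..<n}. X j = X i} > 0" using i by (auto simp: card_gt_0_iff)
      have "(\<Sum>j\<in>{j\<in>{..<n}. X j = X i}. (\<integral>y. f j y \<partial>P)) = (\<Sum>j\<in>{j\<in>{..<n}. X j = X i}. (\<integral>y. f i y \<partial>P))"
        by (rule sum.cong[OF refl], rule swap) (use i in auto)
      also have "\<dots> = real (card {j\<in>{..<n}. X j = X i}) * (\<integral>y. f i y \<partial>P)" by simp
      finally have e: "(\<Sum>j\<in>{j\<in>{..<n}. X j = X i}. (\<integral>y. f j y \<partial>P)) = real (card {j\<in>{..<n}. X j = X i}) * (\<integral>y. f i y \<partial>P)" .
      show "(\<integral>y. f i y \<partial>P) = (\<Sum>j\<in>{j\<in>{..<n}. X j = X i}. (\<integral>y. f j y \<partial>P)) / real (Nblk n X (X i))"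
      proof -
        have cz: "real (card {j\<in>{..<n}. X j = X i}) \<noteq> 0" using cpos by linarith
        show ?thesis unfolding e Nblk_def by (simp only: nonzero_mult_div_cancel_left[OF cz])
      qed
    qed
    have tot: "sum w {..<n} = 1"
    proof -
      have "(\<Sum>i\<in>{i\<in>{..<n}. A i = 0}. (\<Sum>j\<in>{j\<in>{..<n}. X j = X i}. (1::real)) / real (Nblk n X (X i)))
          = (\<Sum>i\<in>{i\<in>{..<n}. A i = 0}. 1)"
      proof (rule sum.cong[OF refl])
        fix i assume "i \<in> {i\<in>{..<n}. A i = 0}"
        then have "card {j\<in>{..<n}. X j = X i} > 0" by (auto simp: card_gt_0_iff)
        then have cz: "real (card {j\<in>{..<n}. X j = X i}) \<noteq> 0" by linarith
        have "(\<Sum>j\<in>{j\<in>{..<n}. X j = X i}. (1::real)) = real (card {j\<in>{..<n}. X j = X i})" by simp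
        then show "(\<Sum>j\<in>{j\<in>{..<n}. X j = X i}. (1::real)) / real (Nblk n X (X i)) = 1"
          unfolding Nblk_def using cz by (metis divide_self)
      qed
      then have "(\<Sum>j<n. real (Nblk0 n X A (X j)) / real (Nblk n X (X j))) = real (N0 n A)"
        using count_lemma[where A=A and X=X and g="\<lambda>_. 1" and n=n] by (simp add: N0_def)
      moreover have "sum w {..<n} = 1 / real (N0 n A) * (\<Sum>j<n. real (Nblk0 n X A (X j)) / real (Nblk n X (X j)))"
        by (simp add: w_def sum_distrib_left)
      ultimately show ?thesis using False by simp
    qed
    have "1 - \<alpha> = (\<integral>y. (1 - \<alpha>) \<partial>P)" by (simp add: P.prob_space)
    also have "\<dots> \<le> (\<integral>y. (\<Sum>j<n. w j * f j y) \<partial>P)"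
    proof (rule integral_mono)
      show "integrable P (\<lambda>y. \<Sum>j<n. w j * f j y)" using intf by auto
      fix y
      show "1 - \<alpha> \<le> (\<Sum>j<n. w j * f j y)"
        unfolding f_def by (rule mass_lemma) (use alpha in \<open>auto simp: wnn tot\<close>)
    qed simp
    also have "\<dots> = (\<Sum>j<n. w j * (\<integral>y. f j y \<partial>P))"
      using intf by (simp add: Bochner_Integration.integral_sum)
    also have "\<dots> = 1 / real (N0 n A) * (\<Sum>j<n. (\<integral>y. f j y \<partial>P) * real (Nblk0 n X A (X j)) / real (Nblk n X (X j)))"
      by (simp add: w_def sum_distrib_left mult.commute)
    also have "\<dots> = 1 / real (N0 n A) * (\<Sum>i\<in>{i\<in>{..<n}. A i = 0}. (\<Sum>j\<in>{j\<in>{..<n}. X j = X i}. (\<integral>y. f j y \<partial>P)) / real (Nblk n X (X i)))"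
      using count_lemma[where A=A and X=X and g="\<lambda>j. (\<integral>y. f j y \<partial>P)" and n=n] by simp
    also have "\<dots> = 1 / real (N0 n A) * (\<Sum>i\<in>{i\<in>{..<n}. A i = 0}. (\<integral>y. f i y \<partial>P))"
      by (rule arg_cong[where f="\<lambda>z. 1 / real (N0 n A) * z"], rule sum.cong[OF refl], rule avg[symmetric]) auto
    also have "\<dots> = (\<integral>y. 1 / real (N0 n A) * (\<Sum>i\<in>{i\<in>{..<n}. A i = 0}. f i y) \<partial>P)"
      using intf by (simp add: Bochner_Integration.integral_sum)
    also have "\<dots> \<le> (\<integral>y. 1 / real (N0 n A) * (\<Sum>i\<in>{i\<in>{..<n}. A i = 0}. c i y) \<partial>P)"
    proof (rule integral_mono)
      show "integrable P (\<lambda>y. 1 / real (N0 n A) * (\<Sum>i\<in>{i\<in>{..<n}. A i = 0}. f i y))"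
      proof -
        have "integrable P (\<lambda>y. \<Sum>i\<in>{i\<in>{..<n}. A i = 0}. f i y)" using intf by auto
        then show ?thesis by simp
      qed
      show "integrable P (\<lambda>y. 1 / real (N0 n A) * (\<Sum>i\<in>{i\<in>{..<n}. A i = 0}. c i y))"
      proof -
        have "integrable P (\<lambda>y. \<Sum>i\<in>{i\<in>{..<n}. A i = 0}. c i y)" using intc by auto
        then show ?thesis by simp
      qed
      fix y
      show "1 / real (N0 n A) * (\<Sum>i\<in>{i\<in>{..<n}. A i = 0}. f i y) \<le> 1 / real (N0 n A) * (\<Sum>i\<in>{i\<in>{..<n}. A i = 0}. c i y)"
        by (intro mult_left_mono sum_mono fc) auto
    qed
    also have "\<dots> = (\<integral>y. coverage \<alpha> s n X A y \<partial>P)" by (simp add: cov_eq)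
    finally show ?thesis .
  qed
qed

end
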